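(* Let $M$ be a finite-dimensional smooth manifold and $E$ a locally convex space. For each equivalence class $[f]\subseteq C^\infty_{fS}(M,E)$ define $\phi_{[f]}\colon [f]\to C^\infty_{vS,c}(M,E)$, $g\mapsto g-f$. Then $\{([f],\phi_{[f]})\}_{f\in C^\infty(M,E)}$ is a smooth atlas (each $\phi_{[f]}$ is a homeomorphism onto $C^\infty_{vS,c}(M,E)$, the domains cover $C^\infty_{fS}(M,E)$, and the transition maps are smooth), so $C^\infty_{fS}(M,E)$ is a smooth manifold modeled on the locally convex space $C^\infty_{vS,c}(M,E)$.
   Context: Conventions: finite-dimensional manifolds are smooth, Hausdorff and $\sigma$-compact. Locally convex spaces are real Hausdorff locally convex topological vector spaces; differentiability is in the sense of Bastiani (Keller $C^r$-theory): for $U\subseteq E$ open and $f\colon U\to F$, $d^{(k)}f(x;y_1,\dots,y_k)=D_{y_k}\cdots D_{y_1}f(x)$ is the iterated directional derivative, and $f$ is smooth if all these exist and are continuous on $U\times E^k$ (and $f$ is continuous); manifolds modeled on locally convex spaces and smooth maps between them are defined via charts with smooth transition maps. Let $M$ be a finite-dimensional manifold of dimension $m$ and $e_1,\dots,e_m$ the standard basis of $\mathbb{R}^m$. For a locally convex space $E$, a continuous seminorm $p$ on $E$, an open $W\subseteq\mathbb{R}^m$, a smooth $g\colon W\to E$, a compact $A\subseteq W$ and $r\in\mathbb{N}_0$ put $\|g\|(r,A,p)=\sup\{p(d^{(k)}g(a;\alpha)) : a\in A,\ \alpha\in\{e_1,\dots,e_m\}^k,\ 0\le k\le r\}$ (for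 $E=\mathbb{R}^n$ one takes $p=\|\cdot\|_\infty$ and writes $\|g\|(r,A)$). For a manifold $X$ modeled on $E$, $f\in C^\infty(M,X)$, a chart $(U,\phi)$ of $M$, a compact $A\subseteq U$, a chart $(V,\psi)$ of $X$ with $f(A)\subseteq V$, a continuous seminorm $p$ on $E$, $r\in\mathbb{N}_0$ and $\epsilon>0$, the elementary neighborhood is $\mathcal{N}^r(f;A,(U,\phi),(V,\psi),p,\epsilon)=\{h\in C^\infty(M,X): h(A)\subseteq V,\ \|\psi\circ h\circ\phi^{-1}-\psi\circ f\circ\phi^{-1}\|(r,\phi(A),p)<\epsilon\}$. A basic neighborhood of $f$ is an intersection $\bigcap_{i\in\Lambda}\mathcal{N}^{r_i}(f;A_i,(U_i,\phi_i),(V_i,\psi_i),p_i,\epsilon_i)$ of elementary neighborhoods of $f$ such that the family $\{A_i\}_{i\in\Lambda}$ is locally finite in $M$. The very strong topology on $C^\infty(M,X)$ is the topology with the basic neighborhoods (of all $f$) as a basis; $C^\infty_{vS}(M,X)$ denotes $C^\infty(M,X)$ with this topology. When source or target is a vector space, its identity chart is used and omitted from the notation. Fine very strong topology: $f,g\in C^\infty(M,X)$ are equivalent, $f\sim g$, if $\overline{\{x\in M: f(x)\neq g(x)\}}$ is compact; the fine very strong topology on $C^\infty(M,X)$ is the topology generated by the very strong topology together with all equivalence classes $[f]$ (so each class is open); $C^\infty_{fS}(M,X)$ denotes $C^\infty(M,X)$ with this topology. $C^\infty_{vS,c}(M,E)$ denotes the set of $f\in C^\infty(M,E)$ with $\overline{\{x: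 f(x)\ne 0\}}$ compact, with the subspace topology from $C^\infty_{vS}(M,E)$ and pointwise vector space operations; it is a locally convex space. Each class $[f]$ carries the subspace topology of $C^\infty_{fS}(M,E)$. *)

theory Defs
  imports "HOL-Analysis.Analysis" "HOL-Library.Function_Algebras"
begin

instantiation "fun" :: (type, real_vector) real_vector
begin
definition scaleR_fun :: "real \<Rightarrow> ('a \<Rightarrow> 'b) \<Rightarrow> 'a \<Rightarrow> 'b"
  where "scaleR_fun c f = (\<lambda>x. c *\<^sub>R f x)"
instance
  by standard (auto simp: scaleR_fun_def fun_eq_iff scaleR_add_right scaleR_add_left)
end

section \<open>Locally convex spaces (set based: the carrier is the topspace)\<close>

definition lcs :: "'v::real_vector topology \<Rightarrow> bool" where
  "lcs T \<longleftrightarrow>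
     subspace (topspace T) \<and> Hausdorff_space T \<and>
     continuous_map (prod_topology T T) T (\<lambda>(x, y). x + y) \<and>
     continuous_map (prod_topology euclideanreal T) T (\<lambda>(c, x). c *\<^sub>R x) \<and>
     (\<forall>W. openin T W \<and> 0 \<in> W \<longrightarrow> (\<exists>C. openin T C \<and> convex C \<and> 0 \<in> C \<and> C \<subseteq> W))"

definition cont_seminorm :: "'v::real_vector topology \<Rightarrow> ('v \<Rightarrow> real) \<Rightarrow> bool" where
  "cont_seminorm T p \<longleftrightarrow>
     (\<forall>x\<in>topspace T. \<forall>y\<in>topspace T. p (x + y) \<le> p x + p y) \<and>
     (\<forall>c. \<forall>x\<in>topspace T. p (c *\<^sub>R x) = \<bar>c\<bar> * p x) \<and>
     continuous_map T euclideanreal p"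

definition diffquot :: "('v::real_vector \<Rightarrow> 'w::real_vector) \<Rightarrow> 'v \<Rightarrow> 'v \<Rightarrow> real \<Rightarrow> 'w" where
  "diffquot f x y t = (1 / t) *\<^sub>R (f (x + t *\<^sub>R y) - f x)"

definition dirderiv :: "'w::real_vector topology \<Rightarrow> ('v::real_vector \<Rightarrow> 'w) \<Rightarrow> 'v \<Rightarrow> 'v \<Rightarrow> 'w" where
  "dirderiv TF f x y = (THE l. limitin TF (diffquot f x y) l (at (0::real)))"

text \<open>Iterated directional derivative: dd TF f k x ys = d^(k) f(x; ys 0, ..., ys (k-1)),
  i.e. D_{ys (k-1)} ... D_{ys 0} f (x).\<close>
fun dd :: "'w::real_vector topology \<Rightarrow> ('v::real_vector \<Rightarrow> 'w) \<Rightarrow> nat \<Rightarrow> 'v \<Rightarrow> (nat \<Rightarrow> 'v) \<Rightarrow> 'w" where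
  "dd TF f 0 x ys = f x"
| "dd TF f (Suc k) x ys = dirderiv TF (\<lambda>z. dd TF f k z ys) x (ys k)"

definition bastiani_smooth ::
  "'v::real_vector topology \<Rightarrow> 'w::real_vector topology \<Rightarrow> 'v set \<Rightarrow> ('v \<Rightarrow> 'w) \<Rightarrow> bool" where
  "bastiani_smooth TE TF U f \<longleftrightarrow>
     openin TE U \<and>
     continuous_map (subtopology TE U) TF f \<and>
     (\<forall>k. \<forall>x\<in>U. \<forall>ys\<in>PiE {..<k} (\<lambda>_. topspace TE). \<forall>y\<in>topspace TE.
        \<exists>l. limitin TF (diffquot (\<lambda>z. dd TF f k z ys) x y) l (at (0::real))) \<and>
     (\<forall>k. continuous_map (prod_topology (subtopology TE U) (product_topology (\<lambda>_. TE) {..<k})) TF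
            (\<lambda>(x, ys). dd TF f k x ys))"

text \<open>The model space R^m is a Euclidean space type 'r, with standard basis Basis.\<close>

definition is_chart :: "'m topology \<Rightarrow> 'm set \<Rightarrow> ('m \<Rightarrow> 'r::euclidean_space) \<Rightarrow> bool" where
  "is_chart TM U \<phi> \<longleftrightarrow> openin TM U \<and> open (\<phi> ` U) \<and>
     homeomorphic_map (subtopology TM U) (subtopology euclidean (\<phi> ` U)) \<phi>"

definition charts_compatible ::
  "'m set \<Rightarrow> ('m \<Rightarrow> 'r::euclidean_space) \<Rightarrow> 'm set \<Rightarrow> ('m \<Rightarrow> 'r) \<Rightarrow> bool" where
  "charts_compatible U \<phi> V \<psi> \<longleftrightarrow>
     bastiani_smooth euclidean euclidean (\<phi> ` (U \<inter> V)) (\<psi> \<circ> inv_into U \<phi>) \<and>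
     bastiani_smooth euclidean euclidean (\<psi> ` (U \<inter> V)) (\<phi> \<circ> inv_into V \<psi>)"

definition smooth_manifold :: "'m topology \<Rightarrow> ('m set \<times> ('m \<Rightarrow> 'r::euclidean_space)) set \<Rightarrow> bool" where
  "smooth_manifold TM \<A> \<longleftrightarrow>
     Hausdorff_space TM \<and>
     (\<exists>K :: nat \<Rightarrow> 'm set. (\<forall>n. compactin TM (K n)) \<and> (\<Union>n. K n) = topspace TM) \<and>
     (\<forall>(U, \<phi>)\<in>\<A>. is_chart TM U \<phi>) \<and>
     (\<Union>(U, \<phi>)\<in>\<A>. U) = topspace TM \<and>
     (\<forall>(U, \<phi>)\<in>\<A>. \<forall>(V, \<psi>)\<in>\<A>. charts_compatible U \<phi> V \<psi>)"

text \<open>The charts of M: all charts compatible with the atlas (the maximal atlas).\<close>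
definition mcharts :: "'m topology \<Rightarrow> ('m set \<times> ('m \<Rightarrow> 'r::euclidean_space)) set
                       \<Rightarrow> ('m set \<times> ('m \<Rightarrow> 'r)) set" where
  "mcharts TM \<A> = {(U, \<phi>). is_chart TM U \<phi> \<and> (\<forall>(V, \<psi>)\<in>\<A>. charts_compatible U \<phi> V \<psi>)}"

text \<open>Smooth maps M \<rightarrow> E (E with its identity chart).\<close>
definition Cinf :: "'m topology \<Rightarrow> ('m set \<times> ('m \<Rightarrow> 'r::euclidean_space)) set
                    \<Rightarrow> 'e::real_vector topology \<Rightarrow> ('m \<Rightarrow> 'e) set" where
  "Cinf TM \<A> TE = {f. (\<forall>(U, \<phi>)\<in>mcharts TM \<A>.
        bastiani_smooth euclidean TE (\<phi> ` U) (f \<circ> inv_into U \<phi>))}"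

text \<open>||g||(r, A, p) (with the value 0 for empty A).\<close>
definition crnorm :: "'e::real_vector topology \<Rightarrow> ('r::euclidean_space \<Rightarrow> 'e) \<Rightarrow> nat \<Rightarrow> 'r set
                      \<Rightarrow> ('e \<Rightarrow> real) \<Rightarrow> real" where
  "crnorm TE g r A p = Sup (insert 0
     {p (dd TE g k a \<alpha>) | a \<alpha> k. a \<in> A \<and> \<alpha> \<in> PiE {..<k} (\<lambda>_. Basis) \<and> k \<le> r})"

text \<open>Data of an elementary neighbourhood: (A, U, \<phi>, p, r, \<epsilon>).\<close>
type_synonym ('m, 'r, 'e) endata = "'m set \<times> 'm set \<times> ('m \<Rightarrow> 'r) \<times> ('e \<Rightarrow> real) \<times> nat \<times> real"

definition valid_endata :: "'m topology \<Rightarrow> ('m set \<times> ('m \<Rightarrow> 'r::euclidean_space)) set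
     \<Rightarrow> 'e::real_vector topology \<Rightarrow> ('m, 'r, 'e) endata \<Rightarrow> bool" where
  "valid_endata TM \<A> TE d \<longleftrightarrow> (case d of (A, U, \<phi>, p, r, \<epsilon>) \<Rightarrow>
     (U, \<phi>) \<in> mcharts TM \<A> \<and> compactin TM A \<and> A \<subseteq> U \<and> cont_seminorm TE p \<and> \<epsilon> > 0)"

definition elem_nbhd :: "'m topology \<Rightarrow> ('m set \<times> ('m \<Rightarrow> 'r::euclidean_space)) set
     \<Rightarrow> 'e::real_vector topology \<Rightarrow> ('m \<Rightarrow> 'e) \<Rightarrow> ('m, 'r, 'e) endata \<Rightarrow> ('m \<Rightarrow> 'e) set" where
  "elem_nbhd TM \<A> TE f d = (case d of (A, U, \<phi>, p, r, \<epsilon>) \<Rightarrow>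
     {h \<in> Cinf TM \<A> TE.
        crnorm TE (\<lambda>x. h (inv_into U \<phi> x) - f (inv_into U \<phi> x)) r (\<phi> ` A) p < \<epsilon>})"

definition basic_nbhds :: "'m topology \<Rightarrow> ('m set \<times> ('m \<Rightarrow> 'r::euclidean_space)) set
     \<Rightarrow> 'e::real_vector topology \<Rightarrow> ('m \<Rightarrow> 'e) set set" where
  "basic_nbhds TM \<A> TE =
     {B. \<exists>f \<in> Cinf TM \<A> TE. \<exists>\<D> :: ('m, 'r, 'e) endata set.
          (\<forall>d\<in>\<D>. valid_endata TM \<A> TE d) \<and>
          (\<forall>x\<in>topspace TM. \<exists>W. openin TM W \<and> x \<in> W \<and> finite {d\<in>\<D>. fst d \<inter> W \<noteq> {}}) \<and>
          B = Cinf TM \<A> TE \<inter> (\<Inter>d\<in>\<D>. elem_nbhd TM \<A> TE f d)}"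

definition vS_top :: "'m topology \<Rightarrow> ('m set \<times> ('m \<Rightarrow> 'r::euclidean_space)) set
     \<Rightarrow> 'e::real_vector topology \<Rightarrow> ('m \<Rightarrow> 'e) topology" where
  "vS_top TM \<A> TE = topology_generated_by (basic_nbhds TM \<A> TE)"

definition fclass :: "'m topology \<Rightarrow> ('m set \<times> ('m \<Rightarrow> 'r::euclidean_space)) set
     \<Rightarrow> 'e::real_vector topology \<Rightarrow> ('m \<Rightarrow> 'e) \<Rightarrow> ('m \<Rightarrow> 'e) set" where
  "fclass TM \<A> TE f = {g \<in> Cinf TM \<A> TE.
      compactin TM (TM closure_of {x \<in> topspace TM. f x \<noteq> g x})}"

definition fS_top :: "'m topology \<Rightarrow> ('m set \<times> ('m \<Rightarrow> 'r::euclidean_space)) set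
     \<Rightarrow> 'e::real_vector topology \<Rightarrow> ('m \<Rightarrow> 'e) topology" where
  "fS_top TM \<A> TE = topology_generated_by
     (basic_nbhds TM \<A> TE \<union> {fclass TM \<A> TE f | f. f \<in> Cinf TM \<A> TE})"

definition Cc :: "'m topology \<Rightarrow> ('m set \<times> ('m \<Rightarrow> 'r::euclidean_space)) set
     \<Rightarrow> 'e::real_vector topology \<Rightarrow> ('m \<Rightarrow> 'e) set" where
  "Cc TM \<A> TE = {f \<in> Cinf TM \<A> TE. compactin TM (TM closure_of {x \<in> topspace TM. f x \<noteq> 0})}"

definition vSc_top :: "'m topology \<Rightarrow> ('m set \<times> ('m \<Rightarrow> 'r::euclidean_space)) set
     \<Rightarrow> 'e::real_vector topology \<Rightarrow> ('m \<Rightarrow> 'e) topology" where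
  "vSc_top TM \<A> TE = subtopology (vS_top TM \<A> TE) (Cc TM \<A> TE)"

end

theory Submission
  imports Defs
begin

lemma lcs_add:
  assumes "lcs TE" "continuous_map X TE f" "continuous_map X TE g"
  shows "continuous_map X TE (\<lambda>x. f x + g x)"
proof -
  have "continuous_map (prod_topology TE TE) TE (\<lambda>(x, y). x + y)" using assms(1) by (simp add: lcs_def)
  then have "continuous_map X TE ((\<lambda>(x, y). x + y) \<circ> (\<lambda>x. (f x, g x)))"
    by (rule continuous_map_compose[rotated]) (simp add: continuous_map_paired assms)
  then show ?thesis by (simp add: o_def)
qed

lemma lcs_scale:
  assumes "lcs TE" "continuous_map X euclideanreal a" "continuous_map X TE f"
  shows "continuous_map X TE (\<lambda>x. a x *\<^sub>R f x)"
proof -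
  have "continuous_map (prod_topology euclideanreal TE) TE (\<lambda>(c, x). c *\<^sub>R x)" using assms(1) by (simp add: lcs_def)
  then have "continuous_map X TE ((\<lambda>(c, x). c *\<^sub>R x) \<circ> (\<lambda>x. (a x, f x)))"
    by (rule continuous_map_compose[rotated]) (simp add: continuous_map_paired assms)
  then show ?thesis by (simp add: o_def)
qed

lemma lcs_lin:
  assumes "lcs TE" "continuous_map X TE f" "continuous_map X TE g"
  shows "continuous_map X TE (\<lambda>x. a *\<^sub>R f x + b *\<^sub>R g x)"
  by (intro lcs_add lcs_scale assms continuous_map_const[THEN iffD2]) auto

lemma lcs_limit_add:
  assumes "lcs TE" "limitin TE f l F" "limitin TE g m F"
  shows "limitin TE (\<lambda>x. f x + g x) (l + m) F"
proof -
  have "continuous_map (prod_topology TE TE) TE (\<lambda>(x, y). x + y)" using assms(1) by (simp add: lcs_def)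
  moreover have "limitin (prod_topology TE TE) (\<lambda>x. (f x, g x)) (l, m) F"
    using assms by (simp add: limitin_pairwise o_def)
  ultimately show ?thesis using continuous_map_limit by (fastforce simp: o_def)
qed

lemma lcs_limit_scale:
  assumes "lcs TE" "limitin TE f l F"
  shows "limitin TE (\<lambda>x. c *\<^sub>R f x) (c *\<^sub>R l) F"
proof -
  have "continuous_map TE TE (\<lambda>x. c *\<^sub>R x)"
    using lcs_scale[OF assms(1), of TE "\<lambda>_. c" id] by simp
  then show ?thesis using continuous_map_limit[OF _ assms(2)] by (fastforce simp: o_def)
qed

lemma cont_real_to_TE:
  assumes "lcs TE" "topspace TE = UNIV" shows "continuous_map euclideanreal TE (\<lambda>s. s *\<^sub>R x)"
  using lcs_scale[OF assms(1), of euclideanreal id "\<lambda>_. x"] assms(2) by simp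

lemma minkowski_seminorm:
  fixes TE :: "'e::real_vector topology"
  assumes L: "lcs TE" and T: "topspace TE = UNIV" and v: "v \<noteq> 0"
  shows "\<exists>p. cont_seminorm TE p \<and> p v > 0"
proof -
  have H: "Hausdorff_space TE" using L by (simp add: lcs_def)
  then obtain U V where UV: "openin TE U" "openin TE V" "0 \<in> U" "v \<in> V" "disjnt U V"
    using v T unfolding Hausdorff_space_def by (metis UNIV_I)
  then obtain C where C: "openin TE C" "convex C" "0 \<in> C" "C \<subseteq> U"
    using L unfolding lcs_def by blast
  have vC: "v \<notin> C" using C UV by (auto simp: disjnt_def)
  define D where "D = C \<inter> {x. - x \<in> C}"
  have negc: "continuous_map TE TE (\<lambda>x. - x)"
    using lcs_scale[OF L, of TE "\<lambda>_. -1" id] by simp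
  have "openin TE {x \<in> topspace TE. - x \<in> C}"
    by (rule openin_continuous_map_preimage[OF negc C(1)])
  then have Dopen: "openin TE D" unfolding D_def using C(1) T by (simp add: openin_Int)
  have Dconv: "convex D"
    unfolding D_def
  proof (rule convex_Int[OF C(2)])
    show "convex {x. - x \<in> C}"
      unfolding convex_def
    proof (intro ballI allI impI)
      fix x y :: 'e and u w :: real
      assume "x \<in> {x. - x \<in> C}" "y \<in> {x. - x \<in> C}" "0 \<le> u" "0 \<le> w" "u + w = 1"
      then have "u *\<^sub>R (- x) + w *\<^sub>R (- y) \<in> C" using C(2) unfolding convex_def by blast
      then show "u *\<^sub>R x + w *\<^sub>R y \<in> {x. - x \<in> C}" by (simp add: algebra_simps)
    qed
  qed
  have D0: "0 \<in> D" using C by (simp add: D_def)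
  have Dsym: "- x \<in> D" if "x \<in> D" for x using that by (auto simp: D_def)
  have vD: "v \<notin> D" using vC by (simp add: D_def)
  have Dscale: "s *\<^sub>R x \<in> D" if "x \<in> D" "0 \<le> s" "s \<le> 1" for x s
  proof -
    have "s *\<^sub>R x + (1 - s) *\<^sub>R 0 \<in> D"
      by (rule convexD[OF Dconv that(1) D0]) (use that in auto)
    then show ?thesis by simp
  qed
  have openpre: "open {s::real. s *\<^sub>R x \<in> D}" for x
  proof -
    have "openin euclideanreal {s \<in> topspace euclideanreal. s *\<^sub>R x \<in> D}"
      by (rule openin_continuous_map_preimage[OF cont_real_to_TE[OF L T] Dopen])
    then show ?thesis by simp
  qed
  define S where "S x = {t::real. 0 < t \<and> (1 / t) *\<^sub>R x \<in> D}" for x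
  define p where "p x = Inf (S x)" for x
  have Sne: "S x \<noteq> {}" for x
  proof -
    obtain e where e: "e > 0" "\<And>s. dist s 0 < e \<Longrightarrow> s \<in> {s. s *\<^sub>R x \<in> D}"
      using openpre[of x] D0 unfolding open_dist by (metis mem_Collect_eq scale_zero_left)
    have "(e/2) *\<^sub>R x \<in> D" using e by simp
    then have "2 / e \<in> S x" using e by (simp add: S_def)
    then show ?thesis by blast
  qed
  have Sbdd: "bdd_below (S x)" for x unfolding S_def bdd_below_def by (rule exI[of _ 0]) auto
  have Sup': "t' \<in> S x" if "t \<in> S x" "t \<le> t'" for x t t'
  proof -
    have t: "0 < t" "(1/t) *\<^sub>R x \<in> D" using that by (auto simp: S_def)
    have "(t / t') *\<^sub>R ((1/t) *\<^sub>R x) \<in> D" by (rule Dscale[OF t(2)]) (use that t in \<open>auto simp: divide_le_eq_1\<close>)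
    then show ?thesis using t that by (simp add: S_def)
  qed
  have plow: "p x \<le> t" if "t \<in> S x" for x t
    unfolding p_def by (rule cInf_lower[OF that Sbdd])
  have pnn: "0 \<le> p x" for x
    unfolding p_def by (rule cInf_greatest[OF Sne]) (auto simp: S_def)
  have pS: "r \<in> S x" if "p x < r" for x r
  proof -
    have "Inf (S x) < r" using that by (simp add: p_def)
    then have "\<exists>t\<in>S x. t < r" by (simp add: cInf_less_iff[OF Sne Sbdd])
    then obtain t where "t \<in> S x" "t < r" by blast
    then show ?thesis using Sup' by auto
  qed
  have pge: "p x \<ge> a" if "\<And>t. t \<in> S x \<Longrightarrow> a \<le> t" for x a
    unfolding p_def by (rule cInf_greatest[OF Sne that])
  have Sscale: "\<bar>c\<bar> * t \<in> S (c *\<^sub>R x)" if "t \<in> S x" "c \<noteq> 0" for c t x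
  proof -
    have t: "0 < t" "(1/t) *\<^sub>R x \<in> D" using that by (auto simp: S_def)
    show ?thesis
    proof (cases "c > 0")
      case True
      then show ?thesis using t by (simp add: S_def)
    next
      case False
      then have "c < 0" using that by simp
      moreover have "- ((1/t) *\<^sub>R x) \<in> D" using Dsym t by blast
      ultimately show ?thesis using t by (simp add: S_def mult_neg_pos)
    qed
  qed
  have pscale_le: "p (c *\<^sub>R x) \<le> \<bar>c\<bar> * p x" if "c \<noteq> 0" for c x
  proof -
    have "p (c *\<^sub>R x) / \<bar>c\<bar> \<le> p x"
    proof (rule pge)
      fix t assume "t \<in> S x"
      then have "p (c *\<^sub>R x) \<le> \<bar>c\<bar> * t" using plow Sscale that by blast
      then show "p (c *\<^sub>R x) / \<bar>c\<bar> \<le> t" using that by (simp add: field_simps)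
    qed
    then show ?thesis using that by (simp add: field_simps)
  qed
  have p0: "p 0 = 0"
  proof -
    have *: "p 0 \<le> e" if "e > 0" for e using plow[of e 0] that D0 by (simp add: S_def)
    show ?thesis
    proof (rule ccontr)
      assume "p 0 \<noteq> 0"
      then have "p 0 > 0" using pnn[of 0] by simp
      then have "p 0 \<le> p 0 / 2" using *[of "p 0 / 2"] by simp
      then show False using \<open>p 0 > 0\<close> by simp
    qed
  qed
  have phom: "p (c *\<^sub>R x) = \<bar>c\<bar> * p x" for c x
  proof (cases "c = 0")
    case True then show ?thesis using p0 by simp
  next
    case False
    have "p x = p (inverse c *\<^sub>R (c *\<^sub>R x))" using False by simp
    also have "\<dots> \<le> \<bar>inverse c\<bar> * p (c *\<^sub>R x)" by (rule pscale_le) (simp add: False)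
    finally have "\<bar>c\<bar> * p x \<le> p (c *\<^sub>R x)" using False
      by (simp add: field_simps abs_inverse)
    then show ?thesis using pscale_le[OF False, of x] by linarith
  qed
  have Sadd: "s + t \<in> S (x + y)" if "s \<in> S x" "t \<in> S y" for s t x y
  proof -
    have s: "0 < s" "(1/s) *\<^sub>R x \<in> D" and t: "0 < t" "(1/t) *\<^sub>R y \<in> D" using that by (auto simp: S_def)
    have "(s/(s+t)) *\<^sub>R ((1/s) *\<^sub>R x) + (t/(s+t)) *\<^sub>R ((1/t) *\<^sub>R y) \<in> D"
      by (rule convexD[OF Dconv s(2) t(2)]) (use s t in \<open>auto simp: add_divide_distrib[symmetric]\<close>)
    then show ?thesis using s t by (simp add: S_def scaleR_add_right)
  qed
  have padd: "p (x + y) \<le> p x + p y" for x y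
  proof -
    have "p (x + y) - p y \<le> p x"
    proof (rule pge)
      fix s assume s: "s \<in> S x"
      have "p (x + y) - s \<le> p y"
      proof (rule pge)
        fix t assume "t \<in> S y"
        then show "p (x + y) - s \<le> t" using plow Sadd s by fastforce
      qed
      then show "p (x + y) - p y \<le> s" by simp
    qed
    then show ?thesis by simp
  qed
  have pneg: "p (- x) = p x" for x using phom[of "-1" x] by simp
  have pcont: "continuous_map TE euclideanreal p"
    unfolding Met_TC.continuous_map_to_metric[simplified mtopology_is_euclidean mball_eq_ball]
  proof (intro ballI allI impI)
    fix y e assume e: "(0::real) < e"
    define N where "N = {x. (2/e) *\<^sub>R (x - y) \<in> D}"
    have cm: "continuous_map TE TE (\<lambda>x. (2/e) *\<^sub>R x + (- (2/e)) *\<^sub>R y)"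
      by (intro lcs_lin L continuous_map_id continuous_map_const[THEN iffD2]) (auto simp: T)
    have "openin TE {x \<in> topspace TE. (2/e) *\<^sub>R x + (- (2/e)) *\<^sub>R y \<in> D}"
      by (rule openin_continuous_map_preimage[OF cm Dopen])
    then have "openin TE N" unfolding N_def using T by (simp add: algebra_simps)
    moreover have "y \<in> N" using D0 by (simp add: N_def)
    moreover have "p x \<in> ball (p y) e" if "x \<in> N" for x
    proof -
      have "e/2 \<in> S (x - y)" using that e by (simp add: N_def S_def)
      then have h: "p (x - y) \<le> e/2" using plow by blast
      have "p x \<le> p y + p (x - y)" using padd[of y "x - y"] by simp
      moreover have "p y \<le> p x + p (x - y)" using padd[of x "y - x"] pneg[of "x - y"] by simp
      ultimately show ?thesis using h e by (simp add: dist_real_def abs_less_iff)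
    qed
    ultimately show "\<exists>U. openin TE U \<and> y \<in> U \<and> (\<forall>x\<in>U. p x \<in> ball (p y) e)" by blast
  qed
  have pv: "p v > 0"
  proof (rule ccontr)
    assume "\<not> p v > 0"
    then have "1 \<in> S v" using pS[of v 1] by simp
    then show False using vD by (simp add: S_def)
  qed
  have "cont_seminorm TE p" unfolding cont_seminorm_def using padd phom pcont by blast
  then show ?thesis using pv by blast
qed

lemma dd_cong: "(\<And>i. i < k \<Longrightarrow> ys i = ys' i) \<Longrightarrow> dd TF F k x ys = dd TF F k x ys'"
proof (induction k arbitrary: x)
  case 0 then show ?case by simp
next
  case (Suc k)
  have "\<And>z. dd TF F k z ys = dd TF F k z ys'" by (rule Suc.IH) (simp add: Suc.prems)
  then have "(\<lambda>z. dd TF F k z ys) = (\<lambda>z. dd TF F k z ys')" by (rule ext)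
  moreover have "ys k = ys' k" by (simp add: Suc.prems)
  ultimately show ?case by (simp only: dd.simps)
qed

lemma dd_restrict: "dd TF F k x (restrict ys {..<k}) = dd TF F k x ys"
  by (rule dd_cong) simp

lemma dirderiv_eq:
  assumes "Hausdorff_space TF" "limitin TF (diffquot f x y) l (at (0::real))"
  shows "dirderiv TF f x y = l"
proof -
  have nt: "\<not> trivial_limit (at (0::real))" by (rule trivial_limit_at)
  show ?thesis unfolding dirderiv_def
  proof (rule the_equality)
    show "limitin TF (diffquot f x y) l (at 0)" by (rule assms(2))
    fix l' assume "limitin TF (diffquot f x y) l' (at 0)"
    then show "l' = l" using limitin_Hausdorff_unique[OF _ assms(2) nt assms(1)] by blast
  qed
qed

lemma eventually_line_in_open:
  fixes x y :: "'r::real_normed_vector"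
  assumes "open U" "x \<in> U"
  shows "eventually (\<lambda>t. x + t *\<^sub>R y \<in> U) (at (0::real))"
proof -
  have "((\<lambda>t. x + t *\<^sub>R y) \<longlongrightarrow> x + 0 *\<^sub>R y) (at (0::real))"
    by (intro tendsto_intros)
  then have "((\<lambda>t. x + t *\<^sub>R y) \<longlongrightarrow> x) (at (0::real))" by simp
  then show ?thesis using assms topological_tendstoD by blast
qed

lemma smooth_EX:
  assumes "bastiani_smooth (euclidean :: 'r::real_normed_vector topology) TF U F" "x \<in> U"
  shows "\<exists>l. limitin TF (diffquot (\<lambda>z. dd TF F k z ys) x y) l (at (0::real))"
proof -
  have "restrict ys {..<k} \<in> PiE {..<k} (\<lambda>_. topspace (euclidean :: 'r topology))" by simp
  then obtain l where "limitin TF (diffquot (\<lambda>z. dd TF F k z (restrict ys {..<k})) x y) l (at (0::real))"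
    using assms unfolding bastiani_smooth_def by fastforce
  then have "limitin TF (diffquot (\<lambda>z. dd TF F k z ys) x y) l (at (0::real))" by (simp add: dd_restrict)
  then show ?thesis by blast
qed

lemma diffquot_lin:
  assumes "t \<noteq> 0"
  shows "diffquot (\<lambda>z. a *\<^sub>R f z + b *\<^sub>R g z) x y t = a *\<^sub>R diffquot f x y t + b *\<^sub>R diffquot g x y t"
  unfolding diffquot_def by (simp add: algebra_simps)

lemma dd_lin:
  fixes F G :: "'r::real_normed_vector \<Rightarrow> 'e::real_vector"
  assumes L: "lcs TF" and sF: "bastiani_smooth euclidean TF U F" and sG: "bastiani_smooth euclidean TF U G"
  shows "x \<in> U \<Longrightarrow> dd TF (\<lambda>x. a *\<^sub>R F x + b *\<^sub>R G x) k x ys = a *\<^sub>R dd TF F k x ys + b *\<^sub>R dd TF G k x ys"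
proof (induction k arbitrary: x)
  case 0 then show ?case by simp
next
  case (Suc k)
  have H: "Hausdorff_space TF" using L by (simp add: lcs_def)
  have U: "open U" using sF by (simp add: bastiani_smooth_def)
  obtain lF where lF: "limitin TF (diffquot (\<lambda>z. dd TF F k z ys) x (ys k)) lF (at (0::real))"
    using smooth_EX[OF sF Suc.prems] by blast
  obtain lG where lG: "limitin TF (diffquot (\<lambda>z. dd TF G k z ys) x (ys k)) lG (at (0::real))"
    using smooth_EX[OF sG Suc.prems] by blast
  have ev: "eventually (\<lambda>t. a *\<^sub>R diffquot (\<lambda>z. dd TF F k z ys) x (ys k) t + b *\<^sub>R diffquot (\<lambda>z. dd TF G k z ys) x (ys k) t
       = diffquot (\<lambda>z. dd TF (\<lambda>x. a *\<^sub>R F x + b *\<^sub>R G x) k z ys) x (ys k) t) (at (0::real))"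
  proof -
    have "eventually (\<lambda>t. x + t *\<^sub>R ys k \<in> U \<and> t \<noteq> 0) (at (0::real))"
      using eventually_line_in_open[OF U Suc.prems] eventually_at_filter[of "\<lambda>t. t \<noteq> 0"]
      by (auto elim: eventually_elim2 simp: eventually_at_filter)
    then show ?thesis
    proof (rule eventually_mono)
      fix t assume t: "x + t *\<^sub>R ys k \<in> U \<and> t \<noteq> 0"
      have "diffquot (\<lambda>z. dd TF (\<lambda>x. a *\<^sub>R F x + b *\<^sub>R G x) k z ys) x (ys k) t
          = (1 / t) *\<^sub>R ((a *\<^sub>R dd TF F k (x + t *\<^sub>R ys k) ys + b *\<^sub>R dd TF G k (x + t *\<^sub>R ys k) ys)
                       - (a *\<^sub>R dd TF F k x ys + b *\<^sub>R dd TF G k x ys))"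
        unfolding diffquot_def using Suc.IH[OF Suc.prems] Suc.IH[of "x + t *\<^sub>R ys k"] t by simp
      then show "a *\<^sub>R diffquot (\<lambda>z. dd TF F k z ys) x (ys k) t + b *\<^sub>R diffquot (\<lambda>z. dd TF G k z ys) x (ys k) t
       = diffquot (\<lambda>z. dd TF (\<lambda>x. a *\<^sub>R F x + b *\<^sub>R G x) k z ys) x (ys k) t" by (simp add: diffquot_def algebra_simps)
    qed
  qed
  have "limitin TF (diffquot (\<lambda>z. dd TF (\<lambda>x. a *\<^sub>R F x + b *\<^sub>R G x) k z ys) x (ys k)) (a *\<^sub>R lF + b *\<^sub>R lG) (at (0::real))"
    by (rule limitin_transform_eventually[OF ev]) (intro lcs_limit_add lcs_limit_scale L lF lG)
  then have "dd TF (\<lambda>x. a *\<^sub>R F x + b *\<^sub>R G x) (Suc k) x ys = a *\<^sub>R lF + b *\<^sub>R lG"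
    using dirderiv_eq[OF H] by simp
  moreover have "dd TF F (Suc k) x ys = lF" using dirderiv_eq[OF H lF] by simp
  moreover have "dd TF G (Suc k) x ys = lG" using dirderiv_eq[OF H lG] by simp
  ultimately show ?case by metis
qed

lemma ev_diffquot_lin:
  fixes F G :: "'r::real_normed_vector \<Rightarrow> 'e::real_vector"
  assumes L: "lcs TF" and sF: "bastiani_smooth euclidean TF U F" and sG: "bastiani_smooth euclidean TF U G"
    and x: "x \<in> U"
  shows "eventually (\<lambda>t. a *\<^sub>R diffquot (\<lambda>z. dd TF F k z ys) x y t + b *\<^sub>R diffquot (\<lambda>z. dd TF G k z ys) x y t
       = diffquot (\<lambda>z. dd TF (\<lambda>x. a *\<^sub>R F x + b *\<^sub>R G x) k z ys) x y t) (at (0::real))"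
proof -
  have U: "open U" using sF by (simp add: bastiani_smooth_def)
  have "eventually (\<lambda>t. x + t *\<^sub>R y \<in> U \<and> t \<noteq> 0) (at (0::real))"
    using eventually_line_in_open[OF U x] eventually_at_filter[of "\<lambda>t. t \<noteq> 0"]
    by (auto elim: eventually_elim2 simp: eventually_at_filter)
  then show ?thesis
  proof (rule eventually_mono)
    fix t assume t: "x + t *\<^sub>R y \<in> U \<and> t \<noteq> 0"
    have "diffquot (\<lambda>z. dd TF (\<lambda>x. a *\<^sub>R F x + b *\<^sub>R G x) k z ys) x y t
        = (1 / t) *\<^sub>R ((a *\<^sub>R dd TF F k (x + t *\<^sub>R y) ys + b *\<^sub>R dd TF G k (x + t *\<^sub>R y) ys)
                     - (a *\<^sub>R dd TF F k x ys + b *\<^sub>R dd TF G k x ys))"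
      unfolding diffquot_def using dd_lin[OF L sF sG x] dd_lin[OF L sF sG, of "x + t *\<^sub>R y"] t by simp
    then show "a *\<^sub>R diffquot (\<lambda>z. dd TF F k z ys) x y t + b *\<^sub>R diffquot (\<lambda>z. dd TF G k z ys) x y t
       = diffquot (\<lambda>z. dd TF (\<lambda>x. a *\<^sub>R F x + b *\<^sub>R G x) k z ys) x y t" by (simp add: diffquot_def algebra_simps)
  qed
qed

lemma smooth_lin:
  fixes F G :: "'r::real_normed_vector \<Rightarrow> 'e::real_vector"
  assumes L: "lcs TF" and T: "topspace TF = UNIV"
    and sF: "bastiani_smooth euclidean TF U F" and sG: "bastiani_smooth euclidean TF U G"
  shows "bastiani_smooth euclidean TF U (\<lambda>x. a *\<^sub>R F x + b *\<^sub>R G x)"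
proof -
  note F = sF[unfolded bastiani_smooth_def] and G = sG[unfolded bastiani_smooth_def]
  note cFk = spec[OF F[THEN conjunct2, THEN conjunct2, THEN conjunct2]]
  note cGk = spec[OF G[THEN conjunct2, THEN conjunct2, THEN conjunct2]]
  note cF0 = F[THEN conjunct2, THEN conjunct1] and cG0 = G[THEN conjunct2, THEN conjunct1]
  have c0: "continuous_map (subtopology euclidean U) TF (\<lambda>x. a *\<^sub>R F x + b *\<^sub>R G x)"
    by (intro lcs_lin L cF0 cG0)
  have lim: "\<exists>l. limitin TF (diffquot (\<lambda>z. dd TF (\<lambda>x. a *\<^sub>R F x + b *\<^sub>R G x) k z ys) x y) l (at (0::real))"
    if x: "x \<in> U" for k x ys y
  proof -
    obtain lF where lF: "limitin TF (diffquot (\<lambda>z. dd TF F k z ys) x y) lF (at (0::real))"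
      using smooth_EX[OF sF x] by blast
    obtain lG where lG: "limitin TF (diffquot (\<lambda>z. dd TF G k z ys) x y) lG (at (0::real))"
      using smooth_EX[OF sG x] by blast
    have "limitin TF (diffquot (\<lambda>z. dd TF (\<lambda>x. a *\<^sub>R F x + b *\<^sub>R G x) k z ys) x y) (a *\<^sub>R lF + b *\<^sub>R lG) (at (0::real))"
      by (rule limitin_transform_eventually[OF ev_diffquot_lin[OF L sF sG x]]) (intro lcs_limit_add lcs_limit_scale L lF lG)
    then show ?thesis by blast
  qed
  have ck: "continuous_map (prod_topology (subtopology euclidean U) (product_topology (\<lambda>_. euclidean::'r topology) {..<k})) TF
            (\<lambda>(x, ys). dd TF (\<lambda>x. a *\<^sub>R F x + b *\<^sub>R G x) k x ys)" for k
  proof (rule continuous_map_eq)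
    show "continuous_map (prod_topology (subtopology euclidean U) (product_topology (\<lambda>_. euclidean::'r topology) {..<k})) TF
            (\<lambda>p. a *\<^sub>R (\<lambda>(x, ys). dd TF F k x ys) p + b *\<^sub>R (\<lambda>(x, ys). dd TF G k x ys) p)"
      using lcs_lin[OF L cFk[of k] cGk[of k], of a b] by simp
  next
    fix p assume "p \<in> topspace (prod_topology (subtopology euclidean U) (product_topology (\<lambda>_. euclidean::'r topology) {..<k}))"
    then have "fst p \<in> U" unfolding topspace_prod_topology topspace_subtopology mem_Times_iff by blast
    then show "a *\<^sub>R (\<lambda>(x, ys). dd TF F k x ys) p + b *\<^sub>R (\<lambda>(x, ys). dd TF G k x ys) p
          = (\<lambda>(x, ys). dd TF (\<lambda>x. a *\<^sub>R F x + b *\<^sub>R G x) k x ys) p"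
      using dd_lin[OF L sF sG] by (cases p) auto
  qed
  show ?thesis unfolding bastiani_smooth_def
    by (intro conjI F[THEN conjunct1] c0 ck allI ballI lim)
qed

lemma Cinf_lin:
  assumes L: "lcs TE" and T: "topspace TE = UNIV"
    and f: "f \<in> Cinf TM \<A> TE" and g: "g \<in> Cinf TM \<A> TE"
  shows "a *\<^sub>R f + b *\<^sub>R g \<in> Cinf TM \<A> TE"
  unfolding Cinf_def
proof (clarify)
  fix U \<phi> assume m: "(U, \<phi>) \<in> mcharts TM \<A>"
  have sf: "bastiani_smooth euclidean TE (\<phi> ` U) (f \<circ> inv_into U \<phi>)" using f m by (auto simp: Cinf_def)
  have sg: "bastiani_smooth euclidean TE (\<phi> ` U) (g \<circ> inv_into U \<phi>)" using g m by (auto simp: Cinf_def)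
  have eq: "(a *\<^sub>R f + b *\<^sub>R g) \<circ> inv_into U \<phi> = (\<lambda>x. a *\<^sub>R (f \<circ> inv_into U \<phi>) x + b *\<^sub>R (g \<circ> inv_into U \<phi>) x)"
    by (simp add: fun_eq_iff scaleR_fun_def)
  show "bastiani_smooth euclidean TE (\<phi> ` U) ((a *\<^sub>R f + b *\<^sub>R g) \<circ> inv_into U \<phi>)"
    unfolding eq by (rule smooth_lin[OF L T sf sg])
qed

lemma Cinf_add: "lcs TE \<Longrightarrow> topspace TE = UNIV \<Longrightarrow> f \<in> Cinf TM \<A> TE \<Longrightarrow> g \<in> Cinf TM \<A> TE \<Longrightarrow> f + g \<in> Cinf TM \<A> TE"
  using Cinf_lin[of TE f TM \<A> g 1 1] by simp

lemma Cinf_diff: "lcs TE \<Longrightarrow> topspace TE = UNIV \<Longrightarrow> f \<in> Cinf TM \<A> TE \<Longrightarrow> g \<in> Cinf TM \<A> TE \<Longrightarrow> f - g \<in> Cinf TM \<A> TE"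
proof -
  have "1 *\<^sub>R f + (-1) *\<^sub>R g = f - g" by (simp add: fun_eq_iff scaleR_fun_def)
  then show "lcs TE \<Longrightarrow> topspace TE = UNIV \<Longrightarrow> f \<in> Cinf TM \<A> TE \<Longrightarrow> g \<in> Cinf TM \<A> TE \<Longrightarrow> f - g \<in> Cinf TM \<A> TE"
    using Cinf_lin[of TE f TM \<A> g 1 "-1"] by simp
qed

lemma cs_lin:
  fixes f g :: "'m \<Rightarrow> 'e::real_vector"
  assumes "compactin TM (TM closure_of {x \<in> topspace TM. f x \<noteq> 0})"
    and "compactin TM (TM closure_of {x \<in> topspace TM. g x \<noteq> 0})"
  shows "compactin TM (TM closure_of {x \<in> topspace TM. a *\<^sub>R f x + b *\<^sub>R g x \<noteq> 0})"
proof (rule closed_compactin)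
  show "compactin TM (TM closure_of {x \<in> topspace TM. f x \<noteq> 0} \<union> TM closure_of {x \<in> topspace TM. g x \<noteq> 0})"
    using assms by (rule compactin_Un)
  have "{x \<in> topspace TM. a *\<^sub>R f x + b *\<^sub>R g x \<noteq> 0} \<subseteq> {x \<in> topspace TM. f x \<noteq> 0} \<union> {x \<in> topspace TM. g x \<noteq> 0}"
    by auto
  then show "TM closure_of {x \<in> topspace TM. a *\<^sub>R f x + b *\<^sub>R g x \<noteq> 0}
     \<subseteq> TM closure_of {x \<in> topspace TM. f x \<noteq> 0} \<union> TM closure_of {x \<in> topspace TM. g x \<noteq> 0}"
    unfolding closure_of_Un[symmetric] by (rule closure_of_mono)
  show "closedin TM (TM closure_of {x \<in> topspace TM. a *\<^sub>R f x + b *\<^sub>R g x \<noteq> 0})" by simp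
qed

lemma Cc_lin:
  assumes L: "lcs TE" and T: "topspace TE = UNIV"
    and f: "f \<in> Cc TM \<A> TE" and g: "g \<in> Cc TM \<A> TE"
  shows "a *\<^sub>R f + b *\<^sub>R g \<in> Cc TM \<A> TE"
  using Cinf_lin[OF L T, of f TM \<A> g a b] cs_lin[of TM f g a b] f g by (simp add: Cc_def scaleR_fun_def)

lemma Cc_add: "lcs TE \<Longrightarrow> topspace TE = UNIV \<Longrightarrow> f \<in> Cc TM \<A> TE \<Longrightarrow> g \<in> Cc TM \<A> TE \<Longrightarrow> f + g \<in> Cc TM \<A> TE"
  using Cc_lin[of TE f TM \<A> g 1 1] by simp

lemma Cc_diff: "lcs TE \<Longrightarrow> topspace TE = UNIV \<Longrightarrow> f \<in> Cc TM \<A> TE \<Longrightarrow> g \<in> Cc TM \<A> TE \<Longrightarrow> f - g \<in> Cc TM \<A> TE"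
proof -
  have "1 *\<^sub>R f + (-1) *\<^sub>R g = f - g" by (simp add: fun_eq_iff scaleR_fun_def)
  then show "lcs TE \<Longrightarrow> topspace TE = UNIV \<Longrightarrow> f \<in> Cc TM \<A> TE \<Longrightarrow> g \<in> Cc TM \<A> TE \<Longrightarrow> f - g \<in> Cc TM \<A> TE"
    using Cc_lin[of TE f TM \<A> g 1 "-1"] by simp
qed

lemma Cc_Cinf: "Cc TM \<A> TE \<subseteq> Cinf TM \<A> TE" by (auto simp: Cc_def)

lemma fclass_iff:
  assumes L: "lcs TE" and T: "topspace TE = UNIV" and f: "f \<in> Cinf TM \<A> TE"
  shows "g \<in> fclass TM \<A> TE f \<longleftrightarrow> g \<in> Cinf TM \<A> TE \<and> g - f \<in> Cc TM \<A> TE"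
proof -
  have "{x \<in> topspace TM. f x \<noteq> g x} = {x \<in> topspace TM. (g - f) x \<noteq> 0}" by auto
  then show ?thesis using Cinf_diff[OF L T _ f, of g] by (auto simp: fclass_def Cc_def)
qed

lemma Cc_zero:
  assumes L: "lcs TE" and T: "topspace TE = UNIV" and f: "f \<in> Cinf TM \<A> TE"
  shows "0 \<in> Cc TM \<A> TE"
proof -
  have "f - f \<in> Cinf TM \<A> TE" by (rule Cinf_diff[OF L T f f])
  then show ?thesis by (simp add: Cc_def)
qed

lemma fclass_self:
  assumes L: "lcs TE" and T: "topspace TE = UNIV" and f: "f \<in> Cinf TM \<A> TE"
  shows "f \<in> fclass TM \<A> TE f"
  using Cc_zero[OF L T f] f by (simp add: fclass_iff[OF L T f])

lemma fclass_image:
  assumes L: "lcs TE" and T: "topspace TE = UNIV" and f: "f \<in> Cinf TM \<A> TE"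
  shows "(\<lambda>g. g - f) ` fclass TM \<A> TE f = Cc TM \<A> TE"
proof
  show "(\<lambda>g. g - f) ` fclass TM \<A> TE f \<subseteq> Cc TM \<A> TE" using fclass_iff[OF L T f] by auto
  show "Cc TM \<A> TE \<subseteq> (\<lambda>g. g - f) ` fclass TM \<A> TE f"
  proof
    fix h assume h: "h \<in> Cc TM \<A> TE"
    have "h + f \<in> fclass TM \<A> TE f"
      using Cinf_add[OF L T _ f, of h] h Cc_Cinf by (auto simp: fclass_iff[OF L T f])
    moreover have "h = (h + f) - f" by simp
    ultimately show "h \<in> (\<lambda>g. g - f) ` fclass TM \<A> TE f" by blast
  qed
qed

lemma fclass_inv:
  assumes L: "lcs TE" and T: "topspace TE = UNIV" and f: "f \<in> Cinf TM \<A> TE" and h: "h \<in> Cc TM \<A> TE"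
  shows "inv_into (fclass TM \<A> TE f) (\<lambda>k. k - f) h = h + f"
proof (rule inv_into_f_eq)
  show "inj_on (\<lambda>k. k - f) (fclass TM \<A> TE f)" by (rule inj_onI) simp
  show "h + f \<in> fclass TM \<A> TE f"
    using Cinf_add[OF L T _ f, of h] h Cc_Cinf by (auto simp: fclass_iff[OF L T f])
qed simp

lemma fclass_eq:
  assumes L: "lcs TE" and T: "topspace TE = UNIV" and f: "f \<in> Cinf TM \<A> TE" and g: "g \<in> Cinf TM \<A> TE"
    and ne: "fclass TM \<A> TE f \<inter> fclass TM \<A> TE g \<noteq> {}"
  shows "fclass TM \<A> TE f = fclass TM \<A> TE g"
proof -
  obtain h where "h \<in> fclass TM \<A> TE f" "h \<in> fclass TM \<A> TE g" using ne by blast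
  then have "h - f \<in> Cc TM \<A> TE" "h - g \<in> Cc TM \<A> TE"
    using fclass_iff[OF L T f] fclass_iff[OF L T g] by auto
  then have gf: "g - f \<in> Cc TM \<A> TE" using Cc_diff[OF L T, of "h - f" TM \<A> "h - g"] by simp
  have "k - f \<in> Cc TM \<A> TE \<longleftrightarrow> k - g \<in> Cc TM \<A> TE" for k
  proof
    assume "k - f \<in> Cc TM \<A> TE" then show "k - g \<in> Cc TM \<A> TE"
      using Cc_diff[OF L T _ gf, of "k - f"] by simp
  next
    assume "k - g \<in> Cc TM \<A> TE" then show "k - f \<in> Cc TM \<A> TE"
      using Cc_add[OF L T _ gf, of "k - g"] by (simp add: algebra_simps)
  qed
  then show ?thesis using fclass_iff[OF L T f] fclass_iff[OF L T g] by auto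
qed

lemma cont_gen:
  assumes "\<And>x. x \<in> topspace X \<Longrightarrow> f x \<in> \<Union>S"
    and "\<And>s. s \<in> S \<Longrightarrow> openin X {x \<in> topspace X. f x \<in> s}"
  shows "continuous_map X (topology_generated_by S) f"
  unfolding continuous_map_def
proof (intro conjI allI impI)
  show "f \<in> topspace X \<rightarrow> topspace (topology_generated_by S)" using assms(1) by auto
  fix U assume "openin (topology_generated_by S) U"
  then have "generate_topology_on S U" by (simp add: openin_topology_generated_by_iff)
  then show "openin X {x \<in> topspace X. f x \<in> U}"
  proof (induction rule: generate_topology_on.induct)
    case Empty then show ?case by simp
  next
    case (Int a b)
    have "{x \<in> topspace X. f x \<in> a \<inter> b} = {x \<in> topspace X. f x \<in> a} \<inter> {x \<in> topspace X. f x \<in> b}" by auto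
    then show ?case using Int by (simp add: openin_Int)
  next
    case (UN K)
    have "{x \<in> topspace X. f x \<in> \<Union>K} = \<Union>((\<lambda>k. {x \<in> topspace X. f x \<in> k}) ` K)" by auto
    then show ?case using UN by (auto intro!: openin_Union)
  next
    case (Basis s) then show ?case using assms(2) by blast
  qed
qed

lemma Cinf_basic:
  assumes "f \<in> Cinf TM \<A> TE"
  shows "Cinf TM \<A> TE \<in> basic_nbhds TM \<A> TE"
  unfolding basic_nbhds_def
proof (intro CollectI bexI[OF _ assms] exI[of _ "{}"] conjI)
  show "\<forall>x\<in>topspace TM. \<exists>W. openin TM W \<and> x \<in> W \<and> finite {d \<in> {}. fst d \<inter> W \<noteq> {}}"
    by (auto intro: openin_topspace)
qed auto

lemma basic_sub: "B \<in> basic_nbhds TM \<A> TE \<Longrightarrow> B \<subseteq> Cinf TM \<A> TE"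
  by (auto simp: basic_nbhds_def)

lemma topspace_vS:
  assumes "f \<in> Cinf TM \<A> TE"
  shows "topspace (vS_top TM \<A> TE) = Cinf TM \<A> TE"
  unfolding vS_top_def topology_generated_by_topspace
  using Cinf_basic[OF assms] basic_sub by blast

lemma topspace_vSc:
  assumes "f \<in> Cinf TM \<A> TE"
  shows "topspace (vSc_top TM \<A> TE) = Cc TM \<A> TE"
  unfolding vSc_top_def using topspace_vS[OF assms] Cc_Cinf[of TM \<A> TE] by auto

lemma elem_nbhd_shift:
  assumes L: "lcs TE" and T: "topspace TE = UNIV" and h: "h \<in> Cinf TM \<A> TE" and c: "c \<in> Cinf TM \<A> TE"
  shows "h + c \<in> elem_nbhd TM \<A> TE f0 d \<longleftrightarrow> h \<in> elem_nbhd TM \<A> TE (f0 - c) d"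
proof -
  obtain A U \<phi> p r \<epsilon> where d: "d = (A, U, \<phi>, p, r, \<epsilon>)" by (cases d) auto
  have eq: "(\<lambda>x. h (inv_into U \<phi> x) + c (inv_into U \<phi> x) - f0 (inv_into U \<phi> x)) = (\<lambda>x. h (inv_into U \<phi> x) - (f0 (inv_into U \<phi> x) - c (inv_into U \<phi> x)))"
    by (simp add: fun_eq_iff algebra_simps)
  show ?thesis unfolding d elem_nbhd_def using Cinf_add[OF L T h c] h by (simp add: eq)
qed

lemma shift_cont:
  assumes L: "lcs TE" and T: "topspace TE = UNIV" and c: "c \<in> Cinf TM \<A> TE"
  shows "continuous_map (vS_top TM \<A> TE) (vS_top TM \<A> TE) (\<lambda>h. h + c)"
proof -
  have ts: "topspace (vS_top TM \<A> TE) = Cinf TM \<A> TE" by (rule topspace_vS[OF c])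
  show ?thesis unfolding vS_top_def[of TM \<A> TE, symmetric, THEN sym] vS_top_def
  proof (rule cont_gen)
    fix x assume "x \<in> topspace (topology_generated_by (basic_nbhds TM \<A> TE))"
    then have "x \<in> Cinf TM \<A> TE" using ts by (simp add: vS_top_def) blast
    then show "x + c \<in> \<Union> (basic_nbhds TM \<A> TE)" using Cinf_add[OF L T _ c] Cinf_basic[OF c] by blast
  next
    fix s assume "s \<in> basic_nbhds TM \<A> TE"
    then obtain f0 \<D> where f0: "f0 \<in> Cinf TM \<A> TE" and D: "\<forall>d\<in>\<D>. valid_endata TM \<A> TE d"
      "\<forall>x\<in>topspace TM. \<exists>W. openin TM W \<and> x \<in> W \<and> finite {d\<in>\<D>. fst d \<inter> W \<noteq> {}}"
      and s: "s = Cinf TM \<A> TE \<inter> (\<Inter>d\<in>\<D>. elem_nbhd TM \<A> TE f0 d)"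
      unfolding basic_nbhds_def by blast
    have f0c: "f0 - c \<in> Cinf TM \<A> TE" by (rule Cinf_diff[OF L T f0 c])
    have "{x \<in> topspace (topology_generated_by (basic_nbhds TM \<A> TE)). x + c \<in> s}
          = Cinf TM \<A> TE \<inter> (\<Inter>d\<in>\<D>. elem_nbhd TM \<A> TE (f0 - c) d)"
      using ts elem_nbhd_shift[OF L T _ c] Cinf_add[OF L T _ c] unfolding s vS_top_def by auto
    also have "\<dots> \<in> basic_nbhds TM \<A> TE"
      unfolding basic_nbhds_def using f0c D by blast
    finally show "openin (topology_generated_by (basic_nbhds TM \<A> TE))
        {x \<in> topspace (topology_generated_by (basic_nbhds TM \<A> TE)). x + c \<in> s}"
      by (rule topology_generated_by_Basis)
  qed
qed

lemma shift_homeo: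
  assumes L: "lcs TE" and T: "topspace TE = UNIV" and c: "c \<in> Cinf TM \<A> TE"
  shows "homeomorphic_map (vS_top TM \<A> TE) (vS_top TM \<A> TE) (\<lambda>h. h + c)"
proof -
  have "c - c - c \<in> Cinf TM \<A> TE" using Cinf_diff[OF L T _ c] Cinf_diff[OF L T c c] by blast
  then have nc: "- c \<in> Cinf TM \<A> TE" by simp
  show ?thesis unfolding homeomorphic_map_maps homeomorphic_maps_def
    by (intro exI[of _ "\<lambda>h. h + - c"] conjI shift_cont[OF L T c] shift_cont[OF L T nc]) auto
qed

lemma seminorm_facts:
  assumes "cont_seminorm TE p" "topspace TE = UNIV"
  shows "p (u + v) \<le> p u + p v" "p (c *\<^sub>R v) = \<bar>c\<bar> * p v" "p (- v) = p v" "p 0 = 0" "0 \<le> p v"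
proof -
  have t: "\<And>x y. p (x + y) \<le> p x + p y" and h: "\<And>c x. p (c *\<^sub>R x) = \<bar>c\<bar> * p x"
    using assms by (simp_all add: cont_seminorm_def)
  show "p (u + v) \<le> p u + p v" by (rule t)
  show "p (c *\<^sub>R v) = \<bar>c\<bar> * p v" by (rule h)
  show n: "p (- v) = p v" using h[of "-1" v] by simp
  show z: "p 0 = 0" using h[of 0 0] by simp
  have "p (v + - v) \<le> p v + p (- v)" by (rule t)
  then show "0 \<le> p v" using n z by simp
qed

lemma seminorm_nonneg:
  assumes "cont_seminorm TE p" "topspace TE = UNIV"
  shows "0 \<le> p v"
  using seminorm_facts[OF assms] by blast

lemma crnorm_pt:
  assumes "\<And>v. 0 \<le> p v"
  shows "crnorm TE g 0 {a} p = p (g a)"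
proof -
  have "{p (dd TE g k a' \<alpha>) | a' \<alpha> k. a' \<in> {a} \<and> \<alpha> \<in> PiE {..<k} (\<lambda>_. Basis) \<and> k \<le> 0} = {p (g a)}"
    by auto
  then have "crnorm TE g 0 {a} p = Sup {0, p (g a)}" by (simp add: crnorm_def)
  also have "\<dots> = p (g a)" by (rule cSup_eq_maximum) (use assms in auto)
  finally show ?thesis .
qed

lemma atlas_chart:
  assumes M: "smooth_manifold TM \<A>" and UA: "(U, \<phi>) \<in> \<A>"
  shows "(U, \<phi>) \<in> mcharts TM \<A>" "inj_on \<phi> U" "U \<subseteq> topspace TM"
proof -
  have ch: "is_chart TM U \<phi>" using M UA unfolding smooth_manifold_def by auto
  have "\<forall>(V, \<psi>)\<in>\<A>. charts_compatible U \<phi> V \<psi>" using M UA unfolding smooth_manifold_def by auto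
  then show "(U, \<phi>) \<in> mcharts TM \<A>" using ch by (simp add: mcharts_def)
  have "homeomorphic_map (subtopology TM U) (subtopology euclidean (\<phi> ` U)) \<phi>" using ch by (simp add: is_chart_def)
  then have "inj_on \<phi> (topspace (subtopology TM U))" by (rule homeomorphic_imp_injective_map)
  moreover show "U \<subseteq> topspace TM" using ch by (simp add: is_chart_def openin_subset)
  ultimately show "inj_on \<phi> U" by (simp add: Int_absorb1)
qed

lemma vS_Hausdorff:
  assumes M: "smooth_manifold TM \<A>" "topspace TM = UNIV"
    and L: "lcs TE" and T: "topspace TE = UNIV"
  shows "Hausdorff_space (vS_top TM \<A> TE)"
  unfolding Hausdorff_space_def
proof (intro allI impI, elim conjE)
  fix h1 h2 assume h1t: "h1 \<in> topspace (vS_top TM \<A> TE)" and h2t: "h2 \<in> topspace (vS_top TM \<A> TE)" and ne: "h1 \<noteq> h2"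
  have h1C: "h1 \<in> Cinf TM \<A> TE" using h1t basic_sub[of _ TM \<A> TE] unfolding vS_top_def topology_generated_by_topspace by blast
  have ts: "topspace (vS_top TM \<A> TE) = Cinf TM \<A> TE" by (rule topspace_vS[OF h1C])
  note h1 = h1t[unfolded ts] and h2 = h2t[unfolded ts]
  obtain x where x: "h1 x \<noteq> h2 x" using ne by (auto simp: fun_eq_iff)
  then obtain p where p: "cont_seminorm TE p" "p (h1 x - h2 x) > 0"
    using minkowski_seminorm[OF L T, of "h1 x - h2 x"] by auto
  have pnn: "\<And>v. 0 \<le> p v" using seminorm_nonneg[OF p(1) T] .
  have ptri: "p (u + v) \<le> p u + p v" for u v using seminorm_facts[OF p(1) T] by blast
  have pneg: "p (- v) = p v" for v using seminorm_facts[OF p(1) T] by blast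
  define \<delta> where "\<delta> = p (h1 x - h2 x)"
  have "x \<in> (\<Union>(U, \<phi>)\<in>\<A>. U)" using M unfolding smooth_manifold_def by auto
  then obtain U \<phi> where UA: "(U, \<phi>) \<in> \<A>" and xU: "x \<in> U" by auto
  note ch = atlas_chart[OF M(1) UA]
  define d where "d = ({x}, U, \<phi>, p, 0::nat, \<delta>/2)"
  have vd: "valid_endata TM \<A> TE d" unfolding d_def valid_endata_def using ch xU p M(2) by (simp add: \<delta>_def)
  have mem: "h \<in> elem_nbhd TM \<A> TE hi d \<longleftrightarrow> h \<in> Cinf TM \<A> TE \<and> p (h x - hi x) < \<delta>/2" for h hi
  proof -
    have inv: "inv_into U \<phi> (\<phi> x) = x" using ch(2) xU by (rule inv_into_f_f)
    have cr: "crnorm TE (\<lambda>z. h (inv_into U \<phi> z) - hi (inv_into U \<phi> z)) 0 {\<phi> x} p = p (h x - hi x)"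
      by (subst crnorm_pt[where p=p, OF pnn]) (simp add: inv)
    show ?thesis unfolding d_def elem_nbhd_def using cr by simp
  qed
  define B where "B hi = Cinf TM \<A> TE \<inter> (\<Inter>d\<in>{d}. elem_nbhd TM \<A> TE hi d)" for hi
  have Bb: "B hi \<in> basic_nbhds TM \<A> TE" if "hi \<in> Cinf TM \<A> TE" for hi
    unfolding basic_nbhds_def B_def
  proof (intro CollectI bexI[OF _ that] exI[of _ "{d}"] conjI)
    show "\<forall>x\<in>topspace TM. \<exists>W. openin TM W \<and> x \<in> W \<and> finite {d' \<in> {d}. fst d' \<inter> W \<noteq> {}}"
      by (auto intro: openin_topspace)
  qed (use vd in auto)
  have Bmem: "h \<in> B hi \<longleftrightarrow> h \<in> Cinf TM \<A> TE \<and> p (h x - hi x) < \<delta>/2" for h hi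
    using mem by (auto simp: B_def)
  have dpos: "\<delta> > 0" using p by (simp add: \<delta>_def)
  have "disjnt (B h1) (B h2)"
    unfolding disjnt_def
  proof (rule equals0I)
    fix h assume "h \<in> B h1 \<inter> B h2"
    then have a: "h \<in> B h1" "h \<in> B h2" by auto
    have "p (h1 x - h2 x) \<le> p (- (h x - h1 x)) + p (h x - h2 x)"
      using ptri[of "- (h x - h1 x)" "h x - h2 x"] by (simp add: algebra_simps)
    moreover have "p (h x - h1 x) < \<delta>/2" "p (h x - h2 x) < \<delta>/2" using a Bmem by blast+
    ultimately show False unfolding pneg by (simp add: \<delta>_def)
  qed
  moreover have "openin (vS_top TM \<A> TE) (B h1)" "openin (vS_top TM \<A> TE) (B h2)"
    unfolding vS_top_def using Bb h1 h2 by (auto intro: topology_generated_by_Basis)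
  moreover have "h1 \<in> B h1" "h2 \<in> B h2" using Bmem h1 h2 dpos seminorm_facts(4)[OF p(1) T] by auto
  ultimately show "\<exists>U V. openin (vS_top TM \<A> TE) U \<and> openin (vS_top TM \<A> TE) V \<and> h1 \<in> U \<and> h2 \<in> V \<and> disjnt U V"
    by blast
qed

lemma gen_mono: "generate_topology_on S T \<Longrightarrow> S \<subseteq> S' \<Longrightarrow> generate_topology_on S' T"
  by (induction rule: generate_topology_on.induct) (auto intro: generate_topology_on.intros)

lemma fS_trace:
  assumes L: "lcs TE" and T: "topspace TE = UNIV" and f: "f \<in> Cinf TM \<A> TE"
  shows "generate_topology_on (basic_nbhds TM \<A> TE \<union> {fclass TM \<A> TE g | g. g \<in> Cinf TM \<A> TE}) a
     \<Longrightarrow> \<exists>b. generate_topology_on (basic_nbhds TM \<A> TE) b \<and> a \<inter> fclass TM \<A> TE f = b \<inter> fclass TM \<A> TE f"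
proof (induction rule: generate_topology_on.induct)
  case Empty then show ?case by (intro exI[of _ "{}"]) (auto intro: generate_topology_on.intros)
next
  case (Int a b)
  then obtain a' b' where "generate_topology_on (basic_nbhds TM \<A> TE) a'" "a \<inter> fclass TM \<A> TE f = a' \<inter> fclass TM \<A> TE f"
    "generate_topology_on (basic_nbhds TM \<A> TE) b'" "b \<inter> fclass TM \<A> TE f = b' \<inter> fclass TM \<A> TE f" by blast
  then show ?case by (intro exI[of _ "a' \<inter> b'"]) (auto intro: generate_topology_on.intros)
next
  case (UN K)
  then obtain B where B: "\<And>k. k \<in> K \<Longrightarrow> generate_topology_on (basic_nbhds TM \<A> TE) (B k) \<and> k \<inter> fclass TM \<A> TE f = B k \<inter> fclass TM \<A> TE f"
    by metis
  have "generate_topology_on (basic_nbhds TM \<A> TE) (\<Union>(B ` K))"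
    by (rule generate_topology_on.UN) (use B in auto)
  moreover have "\<Union>K \<inter> fclass TM \<A> TE f = \<Union>(B ` K) \<inter> fclass TM \<A> TE f" using B by blast
  ultimately show ?case by blast
next
  case (Basis s)
  show ?case
  proof (cases "s \<in> basic_nbhds TM \<A> TE")
    case True then show ?thesis by (auto intro: generate_topology_on.intros)
  next
    case False
    then obtain g where g: "g \<in> Cinf TM \<A> TE" and s: "s = fclass TM \<A> TE g" using Basis by blast
    show ?thesis
    proof (cases "fclass TM \<A> TE f \<inter> fclass TM \<A> TE g = {}")
      case True
      then show ?thesis using s by (intro exI[of _ "{}"]) (auto intro: generate_topology_on.intros)
    next
      case False
      then have "s = fclass TM \<A> TE f" using fclass_eq[OF L T f g] s by simp
      moreover have "fclass TM \<A> TE f \<subseteq> Cinf TM \<A> TE" by (auto simp: fclass_def)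
      ultimately show ?thesis using Cinf_basic[OF f]
        by (intro exI[of _ "Cinf TM \<A> TE"]) (auto intro: generate_topology_on.intros)
    qed
  qed
qed

lemma fS_sub_eq:
  assumes L: "lcs TE" and T: "topspace TE = UNIV" and f: "f \<in> Cinf TM \<A> TE"
  shows "subtopology (fS_top TM \<A> TE) (fclass TM \<A> TE f) = subtopology (vS_top TM \<A> TE) (fclass TM \<A> TE f)"
proof (rule topology_eq[THEN iffD2], intro allI)
  fix U
  show "openin (subtopology (fS_top TM \<A> TE) (fclass TM \<A> TE f)) U = openin (subtopology (vS_top TM \<A> TE) (fclass TM \<A> TE f)) U"
    unfolding openin_subtopology fS_top_def vS_top_def openin_topology_generated_by_iff
  proof
    let ?S = "basic_nbhds TM \<A> TE \<union> {fclass TM \<A> TE g |g. g \<in> Cinf TM \<A> TE}"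
    assume "\<exists>T. generate_topology_on ?S T \<and> U = T \<inter> fclass TM \<A> TE f"
    then obtain T' where T': "generate_topology_on ?S T' \<and> U = T' \<inter> fclass TM \<A> TE f" ..
    have "\<exists>b. generate_topology_on (basic_nbhds TM \<A> TE) b \<and> T' \<inter> fclass TM \<A> TE f = b \<inter> fclass TM \<A> TE f"
      by (rule fS_trace[OF L T f]) (use T' in simp)
    then obtain b where b: "generate_topology_on (basic_nbhds TM \<A> TE) b \<and> T' \<inter> fclass TM \<A> TE f = b \<inter> fclass TM \<A> TE f" ..
    show "\<exists>T. generate_topology_on (basic_nbhds TM \<A> TE) T \<and> U = T \<inter> fclass TM \<A> TE f"
      by (rule exI[of _ b]) (use T' b in simp)
  next
    let ?S = "basic_nbhds TM \<A> TE \<union> {fclass TM \<A> TE g |g. g \<in> Cinf TM \<A> TE}"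
    assume "\<exists>T. generate_topology_on (basic_nbhds TM \<A> TE) T \<and> U = T \<inter> fclass TM \<A> TE f"
    then obtain T' where T': "generate_topology_on (basic_nbhds TM \<A> TE) T' \<and> U = T' \<inter> fclass TM \<A> TE f" ..
    have "generate_topology_on ?S T'" by (rule gen_mono[of "basic_nbhds TM \<A> TE"]) (use T' in auto)
    then show "\<exists>T. generate_topology_on ?S T \<and> U = T \<inter> fclass TM \<A> TE f"
      using T' by blast
  qed
qed

lemma cont_empty_top: "topspace X = {} \<Longrightarrow> continuous_map X Y f"
  by (simp add: continuous_map_def)

lemma shiftX:
  assumes L: "lcs TE" and T: "topspace TE = UNIV" and c: "c \<in> Cc TM \<A> TE"
  shows "continuous_map (vSc_top TM \<A> TE) (vSc_top TM \<A> TE) (\<lambda>h. h + c)"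
proof -
  have cC: "c \<in> Cinf TM \<A> TE" using c Cc_Cinf by blast
  have "continuous_map (vS_top TM \<A> TE) (vS_top TM \<A> TE) (\<lambda>h. h + c)" by (rule shift_cont[OF L T cC])
  then have "continuous_map (subtopology (vS_top TM \<A> TE) (Cc TM \<A> TE)) (vS_top TM \<A> TE) (\<lambda>h. h + c)"
    by (rule continuous_map_from_subtopology)
  moreover have "(\<lambda>h. h + c) ` topspace (subtopology (vS_top TM \<A> TE) (Cc TM \<A> TE)) \<subseteq> Cc TM \<A> TE"
    using Cc_add[OF L T _ c] by auto
  ultimately show ?thesis unfolding vSc_top_def continuous_map_in_subtopology by (auto simp: image_subset_iff_funcset)
qed

lemma topspace_P:
  assumes "p \<in> topspace (prod_topology (subtopology X S) (product_topology (\<lambda>_. X) {..<k}))"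
  shows "fst p \<in> S" "\<And>i. i < k \<Longrightarrow> snd p i \<in> topspace X"
proof -
  obtain x ys where p: "p = (x, ys)" by (cases p)
  have "x \<in> topspace X \<inter> S" "ys \<in> PiE {..<k} (\<lambda>_. topspace X)"
    using assms unfolding p topspace_prod_topology topspace_subtopology topspace_product_topology mem_Times_iff by simp_all
  then show "fst p \<in> S" "\<And>i. i < k \<Longrightarrow> snd p i \<in> topspace X" unfolding p by (auto simp: PiE_mem)
qed

lemma transition_smooth:
  assumes M: "smooth_manifold TM \<A>" "topspace TM = UNIV"
    and L: "lcs TE" and T: "topspace TE = UNIV"
    and f: "f \<in> Cinf TM \<A> TE" and g: "g \<in> Cinf TM \<A> TE"
  shows "bastiani_smooth (vSc_top TM \<A> TE) (vSc_top TM \<A> TE)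
          ((\<lambda>h. h - f) ` (fclass TM \<A> TE f \<inter> fclass TM \<A> TE g))
          (\<lambda>h. (inv_into (fclass TM \<A> TE f) (\<lambda>k. k - f) h) - g)"
proof -
  define X where "X = vSc_top TM \<A> TE"
  define C where "C = Cc TM \<A> TE"
  define F0 where "F0 = (\<lambda>h. (inv_into (fclass TM \<A> TE f) (\<lambda>k. k - f) h) - g)"
  have tsX: "topspace X = C" unfolding X_def C_def by (rule topspace_vSc[OF f])
  have HX: "Hausdorff_space X" unfolding X_def vSc_top_def
    by (rule Hausdorff_space_subtopology[OF vS_Hausdorff[OF M L T]])
  have C0: "0 \<in> C" unfolding C_def by (rule Cc_zero[OF L T f])
  show ?thesis
  proof (cases "fclass TM \<A> TE f \<inter> fclass TM \<A> TE g = {}")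
    case True
    show ?thesis unfolding True image_empty bastiani_smooth_def
      by (intro conjI allI cont_empty_top) auto
  next
    case False
    have eqc: "fclass TM \<A> TE f = fclass TM \<A> TE g" by (rule fclass_eq[OF L T f g False])
    have img: "(\<lambda>h. h - f) ` (fclass TM \<A> TE f \<inter> fclass TM \<A> TE g) = C"
      unfolding eqc[symmetric] Int_absorb C_def by (rule fclass_image[OF L T f])
    have "f \<in> fclass TM \<A> TE g" using fclass_self[OF L T f] eqc by simp
    then have cC: "f - g \<in> C" unfolding C_def using fclass_iff[OF L T g] by blast
    define c where "c = f - g"
    have F0eq: "F0 h = h + c" if "h \<in> C" for h
      using fclass_inv[OF L T f, of h] that unfolding F0_def c_def C_def by (simp add: algebra_simps)
    have Clin: "z + t *\<^sub>R y \<in> C" if "z \<in> C" "y \<in> C" for z y t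
      using Cc_lin[OF L T, of z TM \<A> y 1 t] that unfolding C_def by simp
    have evnz: "eventually (\<lambda>t::real. t \<noteq> 0) (at 0)" by (simp add: eventually_at_filter)
    have limk: "limitin X (diffquot (\<lambda>w. dd X F0 k w ys) z y) (if k = 0 then y else 0) (at 0)"
      if dk: "\<And>w. w \<in> C \<Longrightarrow> dd X F0 k w ys = (if k = 0 then w + c else if k = 1 then ys 0 else 0)"
        and z: "z \<in> C" and y: "y \<in> C" for k ys z y
    proof (rule limitin_eventually)
      show "(if k = 0 then y else 0) \<in> topspace X" using y C0 tsX by simp
      show "eventually (\<lambda>t. diffquot (\<lambda>w. dd X F0 k w ys) z y t = (if k = 0 then y else 0)) (at 0)"
        using evnz
      proof (rule eventually_mono)
        fix t :: real assume t: "t \<noteq> 0"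
        have a: "dd X F0 k (z + t *\<^sub>R y) ys = (if k = 0 then (z + t *\<^sub>R y) + c else if k = 1 then ys 0 else 0)"
          by (rule dk[OF Clin[OF z y]])
        have b: "dd X F0 k z ys = (if k = 0 then z + c else if k = 1 then ys 0 else 0)" by (rule dk[OF z])
        show "diffquot (\<lambda>w. dd X F0 k w ys) z y t = (if k = 0 then y else 0)"
          unfolding diffquot_def a b using t by auto
      qed
    qed
    have ddF: "dd X F0 k z ys = (if k = 0 then z + c else if k = 1 then ys 0 else 0)"
      if "z \<in> C" "\<And>i. i < k \<Longrightarrow> ys i \<in> C" for k z ys
      using that
    proof (induction k arbitrary: z)
      case 0 then show ?case using F0eq by simp
    next
      case (Suc k)
      have dk: "\<And>w. w \<in> C \<Longrightarrow> dd X F0 k w ys = (if k = 0 then w + c else if k = 1 then ys 0 else 0)"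
        using Suc.IH Suc.prems(2) by simp
      have "limitin X (diffquot (\<lambda>w. dd X F0 k w ys) z (ys k)) (if k = 0 then ys k else 0) (at 0)"
        by (rule limk[OF dk Suc.prems(1) Suc.prems(2)]) auto
      then have "dirderiv X (\<lambda>w. dd X F0 k w ys) z (ys k) = (if k = 0 then ys k else 0)" by (rule dirderiv_eq[OF HX])
      then have r: "dd X F0 (Suc k) z ys = (if k = 0 then ys k else 0)" by (simp only: dd.simps)
      show ?case
      proof (cases "k = 0")
        case True then show ?thesis using r by (simp del: dd.simps)
      next
        case False then show ?thesis using r by (simp del: dd.simps)
      qed
    qed
    have sm: "bastiani_smooth X X C F0"
      unfolding bastiani_smooth_def
    proof (intro conjI allI ballI)
      show "openin X C" using tsX openin_topspace by metis
      have "continuous_map X X (\<lambda>h. h + c)" unfolding X_def by (rule shiftX[OF L T cC[unfolded c_def[symmetric] C_def]])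
      then show "continuous_map (subtopology X C) X F0"
        unfolding tsX[symmetric] subtopology_topspace using F0eq tsX by (auto intro: continuous_map_eq)
    next
      fix k :: nat and x ys y assume x: "x \<in> C" and ys: "ys \<in> PiE {..<k} (\<lambda>_. topspace X)" and y: "y \<in> topspace X"
      have "\<And>i. i < k \<Longrightarrow> ys i \<in> C" using ys tsX by (auto simp: PiE_mem)
      then have "\<And>w. w \<in> C \<Longrightarrow> dd X F0 k w ys = (if k = 0 then w + c else if k = 1 then ys 0 else 0)"
        using ddF by blast
      then show "\<exists>l. limitin X (diffquot (\<lambda>z. dd X F0 k z ys) x y) l (at 0)"
        using limk x y tsX by blast
    next
      fix k :: nat
      let ?P = "prod_topology (subtopology X C) (product_topology (\<lambda>_. X) {..<k})"
      have eq: "(\<lambda>(x, ys). dd X F0 k x ys) p = (if k = 0 then fst p + c else if k = 1 then snd p 0 else 0)"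
        if "p \<in> topspace ?P" for p
      proof -
        have "fst p \<in> C" "\<And>i. i < k \<Longrightarrow> snd p i \<in> C" using topspace_P[OF that] tsX by auto
        then show ?thesis using ddF by (simp add: case_prod_unfold)
      qed
      have cX: "continuous_map X X (\<lambda>h. h + c)" unfolding X_def by (rule shiftX[OF L T cC[unfolded c_def[symmetric] C_def]])
      have "continuous_map ?P X (\<lambda>p. if k = 0 then fst p + c else if k = 1 then snd p 0 else 0)"
      proof (cases "k = 0")
        case True
        have "continuous_map ?P X ((\<lambda>h. h + c) \<circ> fst)"
          by (rule continuous_map_compose[OF continuous_map_fst continuous_map_from_subtopology[OF cX]])
        then show ?thesis using True by (simp add: o_def)
      next
        case k0: False
        show ?thesis
        proof (cases "k = 1")
          case True
          have "continuous_map ?P X ((\<lambda>ys. ys 0) \<circ> snd)"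
            by (rule continuous_map_compose[OF continuous_map_snd continuous_map_product_projection]) (use True in simp)
          then show ?thesis using True by (simp add: o_def)
        next
          case False
          then show ?thesis using k0 C0 tsX by simp
        qed
      qed
      then show "continuous_map ?P X (\<lambda>(x, ys). dd X F0 k x ys)"
        by (rule continuous_map_eq) (use eq in simp)
    qed
    show ?thesis using sm unfolding img X_def F0_def .
  qed
qed

theorem proposition4p7:
  fixes TM :: "'m topology"
    and \<A> :: "('m set \<times> ('m \<Rightarrow> 'r::euclidean_space)) set"
    and TE :: "'e::real_vector topology"
  assumes M: "smooth_manifold TM \<A>" "topspace TM = UNIV"
    and E: "lcs TE" "topspace TE = UNIV"
  shows
    "(\<forall>f \<in> Cinf TM \<A> TE.
        openin (fS_top TM \<A> TE) (fclass TM \<A> TE f) \<and>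
        homeomorphic_map (subtopology (fS_top TM \<A> TE) (fclass TM \<A> TE f))
                         (vSc_top TM \<A> TE) (\<lambda>g. g - f)) \<and>
     (\<Union>f \<in> Cinf TM \<A> TE. fclass TM \<A> TE f) = topspace (fS_top TM \<A> TE) \<and>
     (\<forall>f \<in> Cinf TM \<A> TE. \<forall>g \<in> Cinf TM \<A> TE.
        bastiani_smooth (vSc_top TM \<A> TE) (vSc_top TM \<A> TE)
          ((\<lambda>h. h - f) ` (fclass TM \<A> TE f \<inter> fclass TM \<A> TE g))
          (\<lambda>h. (inv_into (fclass TM \<A> TE f) (\<lambda>k. k - f) h) - g))"
proof (intro conjI ballI)
  note L = E(1) and T = E(2)
  fix f assume f: "f \<in> Cinf TM \<A> TE"
  show "openin (fS_top TM \<A> TE) (fclass TM \<A> TE f)"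
    unfolding fS_top_def by (rule topology_generated_by_Basis) (use f in blast)
  have "f - f - f \<in> Cinf TM \<A> TE" using Cinf_diff[OF L T _ f] Cinf_diff[OF L T f f] by blast
  then have nf: "- f \<in> Cinf TM \<A> TE" by simp
  have hm: "homeomorphic_map (vS_top TM \<A> TE) (vS_top TM \<A> TE) (\<lambda>h. h + - f)" by (rule shift_homeo[OF L T nf])
  have sub1: "fclass TM \<A> TE f \<subseteq> Cinf TM \<A> TE" by (auto simp: fclass_def)
  have im: "(\<lambda>h. h + - f) ` (topspace (vS_top TM \<A> TE) \<inter> fclass TM \<A> TE f) = topspace (vS_top TM \<A> TE) \<inter> Cc TM \<A> TE"
    using fclass_image[OF L T f] sub1 Cc_Cinf[of TM \<A> TE] topspace_vS[OF f] by (simp add: Int_absorb1 Int_absorb2)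
  have "homeomorphic_map (subtopology (vS_top TM \<A> TE) (fclass TM \<A> TE f)) (subtopology (vS_top TM \<A> TE) (Cc TM \<A> TE)) (\<lambda>h. h + - f)"
    by (rule homeomorphic_map_subtopologies[OF hm im])
  then show "homeomorphic_map (subtopology (fS_top TM \<A> TE) (fclass TM \<A> TE f)) (vSc_top TM \<A> TE) (\<lambda>g. g - f)"
    by (simp add: fS_sub_eq[OF L T f] vSc_top_def)
next
  note L = E(1) and T = E(2)
  show "(\<Union>f \<in> Cinf TM \<A> TE. fclass TM \<A> TE f) = topspace (fS_top TM \<A> TE)"
    unfolding fS_top_def topology_generated_by_topspace
  proof
    show "(\<Union>f \<in> Cinf TM \<A> TE. fclass TM \<A> TE f) \<subseteq> \<Union> (basic_nbhds TM \<A> TE \<union> {fclass TM \<A> TE g |g. g \<in> Cinf TM \<A> TE})"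
      by blast
    show "\<Union> (basic_nbhds TM \<A> TE \<union> {fclass TM \<A> TE g |g. g \<in> Cinf TM \<A> TE}) \<subseteq> (\<Union>f \<in> Cinf TM \<A> TE. fclass TM \<A> TE f)"
    proof
      fix x assume "x \<in> \<Union> (basic_nbhds TM \<A> TE \<union> {fclass TM \<A> TE g |g. g \<in> Cinf TM \<A> TE})"
      then have x: "x \<in> Cinf TM \<A> TE" using basic_sub[of _ TM \<A> TE] by (auto simp: fclass_def)
      then show "x \<in> (\<Union>f \<in> Cinf TM \<A> TE. fclass TM \<A> TE f)" using fclass_self[OF L T x] by blast
    qed
  qed
next
  fix f g assume "f \<in> Cinf TM \<A> TE" "g \<in> Cinf TM \<A> TE"
  then show "bastiani_smooth (vSc_top TM \<A> TE) (vSc_top TM \<A> TE)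
          ((\<lambda>h. h - f) ` (fclass TM \<A> TE f \<inter> fclass TM \<A> TE g))
          (\<lambda>h. (inv_into (fclass TM \<A> TE f) (\<lambda>k. k - f) h) - g)"
    by (rule transition_smooth[OF M E])
qed

end
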